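(* Let $T$ be an Aronszajn tree and let $A\subseteq T$ be an uncountable antichain. Then there is an infinite chain $C\subseteq T$ such that every element of $C$ is the meet $a\wedge b$ of two distinct elements $a,b\in A$.
   Context: Trees are taken to be subsets $T\subseteq{}^{<\omega_1}\omega$ (functions from countable ordinals to $\omega$) that are closed under initial segments, ordered by $s<_T t$ iff $t$ properly extends $s$. Such a $T$ is an Aronszajn tree if it is uncountable, each level (set of elements with a given domain) is countable, and it has no uncountable chain (branch). For $s,t\in T$ the meet $s\wedge t$ is the longest common initial segment of $s$ and $t$ (an element of $T$). An antichain is a set of pairwise $<_T$-incomparable elements; a chain is a set of pairwise comparable elements. *)

theory Defs
  imports Main "HOL-Library.Countable_Set"
begin

text \<open>omega_1 is modelled by a well-ordered type which is uncountable but all of whose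
  proper initial segments are countable (any such type is order-isomorphic to omega_1).
  An element alpha of the type stands for the countable ordinal {beta. beta < alpha}.\<close>
definition omega1_like :: "('a::wellorder) itself \<Rightarrow> bool" where
  "omega1_like _ \<longleftrightarrow> uncountable (UNIV :: 'a set) \<and> (\<forall>x::'a. countable {y. y < x})"

text \<open>Elements of ${}^{<\omega_1}\omega$: partial functions whose domain is a countable ordinal.\<close>
definition seq :: "('a::wellorder \<Rightarrow> nat option) \<Rightarrow> bool" where
  "seq s \<longleftrightarrow> (\<exists>\<alpha>. dom s = {\<beta>. \<beta> < \<alpha>})"

definition tless :: "('a \<Rightarrow> nat option) \<Rightarrow> ('a \<Rightarrow> nat option) \<Rightarrow> bool" where
  "tless s t \<longleftrightarrow> s \<subseteq>\<^sub>m t \<and> s \<noteq> t"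

definition is_tree :: "('a::wellorder \<Rightarrow> nat option) set \<Rightarrow> bool" where
  "is_tree T \<longleftrightarrow> (\<forall>t\<in>T. seq t) \<and> (\<forall>t\<in>T. \<forall>\<alpha>. t |` {\<beta>. \<beta> < \<alpha>} \<in> T)"

definition level :: "('a::wellorder \<Rightarrow> nat option) set \<Rightarrow> 'a \<Rightarrow> ('a \<Rightarrow> nat option) set" where
  "level T \<alpha> = {t \<in> T. dom t = {\<beta>. \<beta> < \<alpha>}}"

definition is_chain :: "('a \<Rightarrow> nat option) set \<Rightarrow> bool" where
  "is_chain C \<longleftrightarrow> (\<forall>s\<in>C. \<forall>t\<in>C. s = t \<or> tless s t \<or> tless t s)"

definition is_antichain :: "('a \<Rightarrow> nat option) set \<Rightarrow> bool" where
  "is_antichain A \<longleftrightarrow> (\<forall>s\<in>A. \<forall>t\<in>A. \<not> tless s t)"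

definition aronszajn :: "('a::wellorder \<Rightarrow> nat option) set \<Rightarrow> bool" where
  "aronszajn T \<longleftrightarrow> is_tree T \<and> uncountable T \<and> (\<forall>\<alpha>. countable (level T \<alpha>))
     \<and> (\<forall>C\<subseteq>T. is_chain C \<longrightarrow> countable C)"

definition meet :: "('a::wellorder \<Rightarrow> nat option) \<Rightarrow> ('a \<Rightarrow> nat option) \<Rightarrow> ('a \<Rightarrow> nat option)" where
  "meet s t = s |` {\<beta>. \<forall>\<delta>\<le>\<beta>. s \<delta> = t \<delta>}"

end

theory Submission
  imports Defs
begin

definition Sset :: "('a::wellorder \<Rightarrow> nat option) set \<Rightarrow> ('a \<Rightarrow> nat option) set \<Rightarrow> ('a \<Rightarrow> nat option) set" where
  "Sset T A = {t\<in>T. uncountable {a\<in>A. t \<subseteq>\<^sub>m a}}"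

lemma seq_down: "seq t \<Longrightarrow> \<beta> \<in> dom t \<Longrightarrow> \<gamma> \<le> \<beta> \<Longrightarrow> \<gamma> \<in> dom t"
proof -
  assume "seq t" "\<beta> \<in> dom t" "\<gamma> \<le> \<beta>"
  then obtain x where x: "dom t = {\<beta>. \<beta> < x}" unfolding seq_def by blast
  then have "\<beta> < x" using \<open>\<beta> \<in> dom t\<close> by simp
  then have "\<gamma> < x" using \<open>\<gamma> \<le> \<beta>\<close> by simp
  then show "\<gamma> \<in> dom t" using x by simp
qed

lemma comparable:
  assumes "seq u" "seq v" "u \<subseteq>\<^sub>m a" "v \<subseteq>\<^sub>m a"
  shows "u \<subseteq>\<^sub>m v \<or> v \<subseteq>\<^sub>m u"
proof -
  obtain x y where x: "dom u = {\<beta>. \<beta> < x}" and y: "dom v = {\<beta>. \<beta> < y}"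
    using assms(1,2) unfolding seq_def by blast
  show ?thesis
  proof (cases "x \<le> y")
    case True
    then have "dom u \<subseteq> dom v" using x y by auto
    then have "u \<subseteq>\<^sub>m v" using assms(3,4) unfolding map_le_def by (metis domIff subsetD)
    then show ?thesis by simp
  next
    case False
    then have "dom v \<subseteq> dom u" using x y by auto
    then have "v \<subseteq>\<^sub>m u" using assms(3,4) unfolding map_le_def by (metis domIff subsetD)
    then show ?thesis by simp
  qed
qed

lemma restrict_le: "s \<subseteq>\<^sub>m a \<Longrightarrow> dom s \<subseteq> X \<Longrightarrow> s \<subseteq>\<^sub>m a |` X"
  unfolding map_le_def restrict_map_def by auto

lemma restrict_le2: "a |` X \<subseteq>\<^sub>m a"
  unfolding map_le_def restrict_map_def by auto

lemma meet_ge: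
  assumes "seq t" "t \<subseteq>\<^sub>m a" "t \<subseteq>\<^sub>m b"
  shows "t \<subseteq>\<^sub>m meet a b"
  unfolding map_le_def meet_def
proof
  fix \<beta> assume b: "\<beta> \<in> dom t"
  have "\<forall>\<delta>\<le>\<beta>. a \<delta> = b \<delta>"
  proof (intro allI impI)
    fix \<delta> assume "\<delta> \<le> \<beta>"
    then have "\<delta> \<in> dom t" using seq_down[OF assms(1) b] by blast
    then show "a \<delta> = b \<delta>" using assms(2,3) unfolding map_le_def by metis
  qed
  then show "t \<beta> = (a |` {\<beta>. \<forall>\<delta>\<le>\<beta>. a \<delta> = b \<delta>}) \<beta>"
    using assms(2) b unfolding map_le_def by simp
qed

lemma meet_le:
  assumes "seq u" "seq v" "u \<subseteq>\<^sub>m a" "v \<subseteq>\<^sub>m b" "\<not> u \<subseteq>\<^sub>m v" "\<not> v \<subseteq>\<^sub>m u"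
  shows "meet a b \<subseteq>\<^sub>m u"
  unfolding map_le_def
proof
  fix \<beta> assume b: "\<beta> \<in> dom (meet a b)"
  then have D: "\<forall>\<delta>\<le>\<beta>. a \<delta> = b \<delta>" and mb: "meet a b \<beta> = a \<beta>"
    unfolding meet_def by (auto simp: restrict_map_def split: if_splits)
  show "meet a b \<beta> = u \<beta>"
  proof (cases "\<beta> \<in> dom u")
    case True
    then show ?thesis using mb assms(3) unfolding map_le_def by simp
  next
    case False
    obtain x where x: "dom u = {\<beta>. \<beta> < x}" using assms(1) unfolding seq_def by blast
    then have "x \<le> \<beta>" using False by auto
    have "u \<subseteq>\<^sub>m b" unfolding map_le_def
    proof
      fix \<gamma> assume g: "\<gamma> \<in> dom u"
      then have "\<gamma> \<le> \<beta>" using x \<open>x \<le> \<beta>\<close> by auto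
      then show "u \<gamma> = b \<gamma>" using D g assms(3) unfolding map_le_def by metis
    qed
    then have "u \<subseteq>\<^sub>m v \<or> v \<subseteq>\<^sub>m u" using comparable[OF assms(1,2) _ assms(4)] by blast
    then show ?thesis using assms(5,6) by blast
  qed
qed

lemma meet_in:
  assumes "is_tree T" "a \<in> T" "a \<noteq> b"
  shows "meet a b \<in> T"
proof -
  have ex: "\<exists>\<delta>. a \<delta> \<noteq> b \<delta>" using assms(3) by auto
  define \<gamma> where "\<gamma> = (LEAST \<delta>. a \<delta> \<noteq> b \<delta>)"
  have "{\<beta>. \<forall>\<delta>\<le>\<beta>. a \<delta> = b \<delta>} = {\<beta>. \<beta> < \<gamma>}"
  proof (intro set_eqI iffI)
    fix \<beta> assume "\<beta> \<in> {\<beta>. \<forall>\<delta>\<le>\<beta>. a \<delta> = b \<delta>}"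
    then have "\<forall>\<delta>\<le>\<beta>. a \<delta> = b \<delta>" by simp
    moreover have "a \<gamma> \<noteq> b \<gamma>" unfolding \<gamma>_def using ex by (rule LeastI_ex)
    ultimately show "\<beta> \<in> {\<beta>. \<beta> < \<gamma>}" using not_le by auto
  next
    fix \<beta> assume "\<beta> \<in> {\<beta>. \<beta> < \<gamma>}"
    then have lt: "\<beta> < \<gamma>" by simp
    have "a \<delta> = b \<delta>" if "\<delta> \<le> \<beta>" for \<delta>
    proof -
      have "\<delta> < \<gamma>" using that lt by simp
      then show ?thesis unfolding \<gamma>_def using not_less_Least by blast
    qed
    then show "\<beta> \<in> {\<beta>. \<forall>\<delta>\<le>\<beta>. a \<delta> = b \<delta>}" by simp
  qed
  then have "meet a b = a |` {\<beta>. \<beta> < \<gamma>}" unfolding meet_def by simp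
  then show ?thesis using assms(1,2) unfolding is_tree_def by simp
qed

lemma keyK:
  fixes T A :: "('a::wellorder \<Rightarrow> nat option) set"
  assumes om: "omega1_like TYPE('a)" and ar: "aronszajn T" and AT: "A \<subseteq> T"
    and sS: "s \<in> Sset T A"
  shows "\<exists>t1\<in>Sset T A. \<exists>t2\<in>Sset T A. s \<subseteq>\<^sub>m t1 \<and> s \<subseteq>\<^sub>m t2 \<and> \<not> t1 \<subseteq>\<^sub>m t2 \<and> \<not> t2 \<subseteq>\<^sub>m t1"
proof (rule ccontr)
  assume nc: "\<not> ?thesis"
  define U where "U = {t\<in>Sset T A. s \<subseteq>\<^sub>m t}"
  have UT: "U \<subseteq> T" unfolding U_def Sset_def by auto
  have ch: "is_chain U" unfolding is_chain_def
  proof (intro ballI)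
    fix p q assume "p \<in> U" "q \<in> U"
    then have "p \<subseteq>\<^sub>m q \<or> q \<subseteq>\<^sub>m p" using nc unfolding U_def by blast
    then show "p = q \<or> tless p q \<or> tless q p" unfolding tless_def by blast
  qed
  have cU: "countable U" using ar UT ch unfolding aronszajn_def by blast
  have tr: "is_tree T" using ar unfolding aronszajn_def by blast
  have seqT: "\<And>t. t \<in> T \<Longrightarrow> seq t" using tr unfolding is_tree_def by blast
  define h where "h t = (SOME x. dom t = {\<beta>. \<beta> < x})" for t :: "'a \<Rightarrow> nat option"
  have hdom: "dom t = {\<beta>. \<beta> < h t}" if "t \<in> T" for t
    unfolding h_def using seqT[OF that] unfolding seq_def by (rule someI_ex)
  have cnt: "countable {y::'a. y < x}" for x using om unfolding omega1_like_def by blast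
  have unc: "uncountable (UNIV :: 'a set)" using om unfolding omega1_like_def by blast
  have cle: "countable {y::'a. y \<le> x}" for x
  proof -
    have "{y::'a. y \<le> x} = insert x {y. y < x}" by auto
    then show ?thesis using cnt by simp
  qed
  have cY: "countable (\<Union>x\<in>h`U. {y. y \<le> x})" using cU cle by auto
  then have "(\<Union>x\<in>h`U. {y. y \<le> x}) \<noteq> UNIV" using unc by auto
  then obtain \<alpha> where \<alpha>: "\<alpha> \<notin> (\<Union>x\<in>h`U. {y. y \<le> x})" by blast
  have agt: "h t < \<alpha>" if "t \<in> U" for t using \<alpha> that by (auto simp: not_le)
  define B where "B = {a\<in>A. s \<subseteq>\<^sub>m a \<and> \<alpha> \<in> dom a}"
  have uA: "uncountable {a\<in>A. s \<subseteq>\<^sub>m a}" using sS unfolding Sset_def by blast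
  have sub: "{a\<in>A. s \<subseteq>\<^sub>m a} \<subseteq> B \<union> (\<Union>\<gamma>\<in>{\<gamma>. \<gamma> \<le> \<alpha>}. level T \<gamma>)"
  proof
    fix a assume a: "a \<in> {a\<in>A. s \<subseteq>\<^sub>m a}"
    show "a \<in> B \<union> (\<Union>\<gamma>\<in>{\<gamma>. \<gamma> \<le> \<alpha>}. level T \<gamma>)"
    proof (cases "\<alpha> \<in> dom a")
      case True then show ?thesis using a unfolding B_def by auto
    next
      case False
      have aT: "a \<in> T" using a AT by auto
      then have "h a \<le> \<alpha>" using hdom[OF aT] False by (auto simp: not_less)
      moreover have "a \<in> level T (h a)" using hdom[OF aT] aT unfolding level_def by auto
      ultimately show ?thesis by blast
    qed
  qed
  have clev: "countable (level T \<gamma>)" for \<gamma> using ar unfolding aronszajn_def by blast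
  have uB: "uncountable B"
  proof
    assume "countable B"
    then have "countable (B \<union> (\<Union>\<gamma>\<in>{\<gamma>. \<gamma> \<le> \<alpha>}. level T \<gamma>))" using cle clev by auto
    then show False using uA countable_subset[OF sub] by blast
  qed
  have Bsub: "B \<subseteq> (\<Union>t\<in>level T \<alpha>. {a\<in>B. a |` {\<beta>. \<beta> < \<alpha>} = t})"
  proof
    fix a assume a: "a \<in> B"
    then have aT: "a \<in> T" using AT unfolding B_def by auto
    have "\<alpha> < h a" using a hdom[OF aT] unfolding B_def by auto
    then have "{\<beta>. \<beta> < \<alpha>} \<subseteq> dom a" using hdom[OF aT] by auto
    then have "dom (a |` {\<beta>. \<beta> < \<alpha>}) = {\<beta>. \<beta> < \<alpha>}" by auto
    moreover have "a |` {\<beta>. \<beta> < \<alpha>} \<in> T" using tr aT unfolding is_tree_def by blast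
    ultimately have "a |` {\<beta>. \<beta> < \<alpha>} \<in> level T \<alpha>" unfolding level_def by simp
    then show "a \<in> (\<Union>t\<in>level T \<alpha>. {a\<in>B. a |` {\<beta>. \<beta> < \<alpha>} = t})" using a by blast
  qed
  obtain t where tl: "t \<in> level T \<alpha>" and ut: "uncountable {a\<in>B. a |` {\<beta>. \<beta> < \<alpha>} = t}"
  proof -
    have "\<not> (\<forall>t\<in>level T \<alpha>. countable {a\<in>B. a |` {\<beta>. \<beta> < \<alpha>} = t})"
    proof
      assume "\<forall>t\<in>level T \<alpha>. countable {a\<in>B. a |` {\<beta>. \<beta> < \<alpha>} = t}"
      then have "countable (\<Union>t\<in>level T \<alpha>. {a\<in>B. a |` {\<beta>. \<beta> < \<alpha>} = t})"
        using clev by auto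
      then show False using uB countable_subset[OF Bsub] by blast
    qed
    then show ?thesis using that by blast
  qed
  have tT: "t \<in> T" and dt: "dom t = {\<beta>. \<beta> < \<alpha>}" using tl unfolding level_def by auto
  have "{a\<in>B. a |` {\<beta>. \<beta> < \<alpha>} = t} \<subseteq> {a\<in>A. t \<subseteq>\<^sub>m a}"
  proof
    fix a assume "a \<in> {a\<in>B. a |` {\<beta>. \<beta> < \<alpha>} = t}"
    then have "a \<in> A" "a |` {\<beta>. \<beta> < \<alpha>} = t" unfolding B_def by auto
    then show "a \<in> {a\<in>A. t \<subseteq>\<^sub>m a}" using restrict_le2[of a "{\<beta>. \<beta> < \<alpha>}"] by simp
  qed
  then have "uncountable {a\<in>A. t \<subseteq>\<^sub>m a}" using ut countable_subset by blast
  then have tS: "t \<in> Sset T A" using tT unfolding Sset_def by blast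
  have "{a\<in>B. a |` {\<beta>. \<beta> < \<alpha>} = t} \<noteq> {}" using ut by (metis countable_empty)
  then obtain a where a: "a \<in> B" "a |` {\<beta>. \<beta> < \<alpha>} = t" by blast
  have sU: "s \<in> U" unfolding U_def using sS by simp
  have sT: "s \<in> T" using sS unfolding Sset_def by blast
  have "dom s \<subseteq> {\<beta>. \<beta> < \<alpha>}" using hdom[OF sT] agt[OF sU] by auto
  moreover have "s \<subseteq>\<^sub>m a" using a(1) unfolding B_def by simp
  ultimately have "s \<subseteq>\<^sub>m a |` {\<beta>. \<beta> < \<alpha>}" using restrict_le by blast
  then have "s \<subseteq>\<^sub>m t" using a(2) by simp
  then have "t \<in> U" unfolding U_def using tS by simp
  then have "h t < \<alpha>" by (rule agt)
  then have "h t \<in> dom t" using dt by simp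
  then show False using hdom[OF tT] by simp
qed

lemma stepL:
  fixes T A :: "('a::wellorder \<Rightarrow> nat option) set"
  assumes om: "omega1_like TYPE('a)" and ar: "aronszajn T" and AT: "A \<subseteq> T"
    and sS: "s \<in> Sset T A"
  shows "\<exists>m\<in>Sset T A. tless s m \<and> (\<exists>a\<in>A. \<exists>b\<in>A. a \<noteq> b \<and> m = meet a b)"
proof -
  have tr: "is_tree T" using ar unfolding aronszajn_def by blast
  have seqT: "\<And>t. t \<in> T \<Longrightarrow> seq t" using tr unfolding is_tree_def by blast
  have ST: "Sset T A \<subseteq> T" unfolding Sset_def by auto
  obtain t1 t2 where t1: "t1 \<in> Sset T A" "t2 \<in> Sset T A" "s \<subseteq>\<^sub>m t1" "s \<subseteq>\<^sub>m t2"
      "\<not> t1 \<subseteq>\<^sub>m t2" "\<not> t2 \<subseteq>\<^sub>m t1"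
    using keyK[OF om ar AT sS] by blast
  obtain u1 u2 where u: "u1 \<in> Sset T A" "u2 \<in> Sset T A" "t1 \<subseteq>\<^sub>m u1" "t1 \<subseteq>\<^sub>m u2"
      "\<not> u1 \<subseteq>\<^sub>m u2" "\<not> u2 \<subseteq>\<^sub>m u1"
    using keyK[OF om ar AT t1(1)] by blast
  have ne: "\<exists>a. a \<in> A \<and> u \<subseteq>\<^sub>m a" if "u \<in> Sset T A" for u
  proof -
    have "uncountable {a\<in>A. u \<subseteq>\<^sub>m a}" using that unfolding Sset_def by simp
    then have "{a\<in>A. u \<subseteq>\<^sub>m a} \<noteq> {}" using countable_empty by force
    then show ?thesis by auto
  qed
  obtain a1 where a1: "a1 \<in> A" "u1 \<subseteq>\<^sub>m a1" using ne[OF u(1)] by blast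
  obtain a2 where a2: "a2 \<in> A" "u2 \<subseteq>\<^sub>m a2" using ne[OF u(2)] by blast
  have su1: "seq u1" and su2: "seq u2" using u ST seqT by auto
  have st1: "seq t1" using t1 ST seqT by auto
  have "a1 \<noteq> a2"
  proof
    assume "a1 = a2"
    then show False using comparable[OF su1 su2 a1(2)] a2(2) u(5,6) by simp
  qed
  define m where "m = meet a1 a2"
  have mT: "m \<in> T" unfolding m_def using meet_in[OF tr _ \<open>a1 \<noteq> a2\<close>] a1 AT by blast
  have t1m: "t1 \<subseteq>\<^sub>m m" unfolding m_def
    using meet_ge[OF st1] map_le_trans[OF u(3) a1(2)] map_le_trans[OF u(4) a2(2)] by blast
  have mu1: "m \<subseteq>\<^sub>m u1" unfolding m_def using meet_le[OF su1 su2 a1(2) a2(2) u(5,6)] .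
  have sub: "{a\<in>A. u1 \<subseteq>\<^sub>m a} \<subseteq> {a\<in>A. m \<subseteq>\<^sub>m a}" using mu1 map_le_trans by blast
  have "uncountable {a\<in>A. u1 \<subseteq>\<^sub>m a}" using u(1) unfolding Sset_def by simp
  then have "uncountable {a\<in>A. m \<subseteq>\<^sub>m a}" using countable_subset[OF sub] by blast
  then have mS: "m \<in> Sset T A" using mT unfolding Sset_def by simp
  have "s \<subseteq>\<^sub>m m" using t1(3) t1m map_le_trans by blast
  moreover have "s \<noteq> m"
  proof
    assume "s = m"
    then have "t1 \<subseteq>\<^sub>m s" using t1m by simp
    then have "t1 = s" using t1(3) map_le_antisym by blast
    then show False using t1(4,5) by simp
  qed
  ultimately have "tless s m" unfolding tless_def by simp
  moreover have "\<exists>a\<in>A. \<exists>b\<in>A. a \<noteq> b \<and> m = meet a b"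
    using a1(1) a2(1) \<open>a1 \<noteq> a2\<close> unfolding m_def by blast
  ultimately show ?thesis using mS by blast
qed

lemma tless_trans: "tless a b \<Longrightarrow> tless b c \<Longrightarrow> tless a c"
  unfolding tless_def using map_le_trans map_le_antisym by blast

theorem lemma1:
  fixes T A :: "('a::wellorder \<Rightarrow> nat option) set"
  assumes "omega1_like TYPE('a)"
    and "aronszajn T"
    and "A \<subseteq> T" and "uncountable A" and "is_antichain A"
  shows "\<exists>C\<subseteq>T. infinite C \<and> is_chain C \<and>
           (\<forall>c\<in>C. \<exists>a\<in>A. \<exists>b\<in>A. a \<noteq> b \<and> c = meet a b)"
proof -
  have tr: "is_tree T" using assms(2) unfolding aronszajn_def by blast
  have "T \<noteq> {}" using assms(2) unfolding aronszajn_def by auto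
  then obtain t0 where t0: "t0 \<in> T" by blast
  define r where "r = t0 |` {\<beta>. \<beta> < (LEAST x::'a. True)}"
  have rT: "r \<in> T" unfolding r_def using tr t0 unfolding is_tree_def by blast
  have "{\<beta>::'a. \<beta> < (LEAST x::'a. True)} = {}" using not_less_Least by blast
  then have r0: "r = Map.empty" unfolding r_def by simp
  have "{a\<in>A. r \<subseteq>\<^sub>m a} = A" using r0 by simp
  then have rS: "r \<in> Sset T A" using rT assms(4) unfolding Sset_def by simp
  define P where "P s m \<longleftrightarrow> m \<in> Sset T A \<and> tless s m \<and> (\<exists>a\<in>A. \<exists>b\<in>A. a \<noteq> b \<and> m = meet a b)" for s m
  define g where "g s = (SOME m. P s m)" for s
  have gP: "P s (g s)" if "s \<in> Sset T A" for s
  proof -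
    have "\<exists>m. P s m" using stepL[OF assms(1,2,3) that] unfolding P_def by blast
    then show ?thesis unfolding g_def by (rule someI_ex)
  qed
  define f where "f n = (g ^^ n) r" for n
  have fS: "f n \<in> Sset T A" for n
    by (induction n) (use rS gP P_def in \<open>auto simp: f_def\<close>)
  have fsuc: "f (Suc n) = g (f n)" for n unfolding f_def by simp
  have fP: "P (f n) (f (Suc n))" for n using gP[OF fS] fsuc by simp
  have mono: "tless (f i) (f j)" if "i < j" for i j
    using that
  proof (induction j)
    case 0 then show ?case by simp
  next
    case (Suc j)
    have st: "tless (f j) (f (Suc j))" using fP P_def by simp
    show ?case
    proof (cases "i = j")
      case True then show ?thesis using st by simp
    next
      case False
      then have "i < j" using Suc.prems by simp
      then show ?thesis using Suc.IH st tless_trans by blast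
    qed
  qed
  have irr: "\<not> tless x x" for x unfolding tless_def by simp
  define C where "C = range (\<lambda>n. f (Suc n))"
  have inj: "inj (\<lambda>n. f (Suc n))"
  proof (rule injI)
    fix i j assume e: "f (Suc i) = f (Suc j)"
    show "i = j"
    proof (rule ccontr)
      assume "i \<noteq> j"
      then have "i < j \<or> j < i" by arith
      then show False using mono[of "Suc i" "Suc j"] mono[of "Suc j" "Suc i"] e irr by auto
    qed
  qed
  have "infinite C" unfolding C_def using inj range_inj_infinite by blast
  moreover have "C \<subseteq> T" unfolding C_def using fS unfolding Sset_def by auto
  moreover have "is_chain C" unfolding is_chain_def C_def
  proof (intro ballI)
    fix s t assume "s \<in> range (\<lambda>n. f (Suc n))" "t \<in> range (\<lambda>n. f (Suc n))"
    then obtain i j where "s = f (Suc i)" "t = f (Suc j)" by blast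
    moreover have "i = j \<or> i < j \<or> j < i" by arith
    ultimately show "s = t \<or> tless s t \<or> tless t s" using mono by auto
  qed
  moreover have "\<forall>c\<in>C. \<exists>a\<in>A. \<exists>b\<in>A. a \<noteq> b \<and> c = meet a b"
    unfolding C_def using fP P_def by auto
  ultimately show ?thesis by blast
qed

end
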